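(* Let $X$ be a Banach space, $F$ a Banach lattice, and let $(T_n)$ be a sequence of limitedly L-weakly compact operators from $X$ to $F$ converging in operator norm to an operator $T:X\to F$. Then $T$ is limitedly L-weakly compact.
   Context: All vector spaces are real and operators are linear and bounded. For a subset $A$ of a Banach lattice $F$, $\mathrm{sol}(A)=\bigcup_{a\in A}[-|a|,|a|]$. A subset $A\subseteq F$ is an Lwc-set if every disjoint sequence in $\mathrm{sol}(A)$ is norm-null. A bounded subset $A$ of a Banach space $X$ is limited if every weak$^\ast$-null sequence in $X'$ converges to $0$ uniformly on $A$. An operator $T:X\to F$ is limitedly L-weakly compact if $T$ maps every limited subset of $X$ onto an Lwc-subset of $F$. *)

theory Defs
  imports "HOL-Analysis.Analysis"
begin

definition lat_abs :: "'a::{lattice, uminus} \<Rightarrow> 'a" where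
  "lat_abs x = sup x (- x)"

class banach_lattice = banach + ordered_real_vector + lattice +
  assumes norm_lattice_mono: "sup x (- x) \<le> sup y (- y) \<Longrightarrow> norm x \<le> norm y"

definition sol :: "'a::banach_lattice set \<Rightarrow> 'a set" where
  "sol A = (\<Union>a\<in>A. {- lat_abs a .. lat_abs a})"

definition disjoint_seq :: "(nat \<Rightarrow> 'a::banach_lattice) \<Rightarrow> bool" where
  "disjoint_seq x \<longleftrightarrow> (\<forall>n m. n \<noteq> m \<longrightarrow> inf (lat_abs (x n)) (lat_abs (x m)) = 0)"

definition lwc_set :: "'a::banach_lattice set \<Rightarrow> bool" where
  "lwc_set A \<longleftrightarrow> (\<forall>x. (\<forall>n. x n \<in> sol A) \<and> disjoint_seq x \<longrightarrow> x \<longlonglongrightarrow> 0)"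

definition limited_set :: "'a::banach set \<Rightarrow> bool" where
  "limited_set A \<longleftrightarrow> bounded A \<and>
     (\<forall>f :: nat \<Rightarrow> ('a \<Rightarrow>\<^sub>L real).
        (\<forall>x. (\<lambda>n. blinfun_apply (f n) x) \<longlonglongrightarrow> 0) \<longrightarrow>
        (\<forall>e>0. \<forall>\<^sub>F n in sequentially. \<forall>a\<in>A. \<bar>blinfun_apply (f n) a\<bar> < e))"

definition limitedly_L_weakly_compact :: "('a::banach \<Rightarrow>\<^sub>L 'b::banach_lattice) \<Rightarrow> bool" where
  "limitedly_L_weakly_compact T \<longleftrightarrow>
     (\<forall>A. limited_set A \<longrightarrow> lwc_set (blinfun_apply T ` A))"

end

theory Submission
  imports Defs
begin

lemma la_nonneg: "0 \<le> lat_abs (x::'b::banach_lattice)"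
proof -
  have "x + - x \<le> lat_abs x + lat_abs x" unfolding lat_abs_def by (intro add_mono) auto
  hence "0 \<le> lat_abs x + lat_abs x" by simp
  hence "0 \<le> (1/2::real) *\<^sub>R (lat_abs x + lat_abs x)" by (intro scaleR_nonneg_nonneg) auto
  also have "(1/2::real) *\<^sub>R (lat_abs x + lat_abs x) = lat_abs x"
    by (metis scaleR_2 scaleR_scaleR nonzero_divide_eq_eq scaleR_one divide_self_if zero_neq_numeral times_divide_eq_left mult.commute)
  finally show ?thesis .
qed

lemma la_pos: "0 \<le> (x::'b::banach_lattice) \<Longrightarrow> lat_abs x = x"
  unfolding lat_abs_def by (metis neg_le_0_iff_le order_trans sup.absorb1)

lemma la_le: "- c \<le> (x::'b::banach_lattice) \<Longrightarrow> x \<le> c \<Longrightarrow> lat_abs x \<le> c"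
  unfolding lat_abs_def by (simp add: minus_le_iff)

lemma la_tri: "lat_abs ((u::'b::banach_lattice) + v) \<le> lat_abs u + lat_abs v"
  unfolding lat_abs_def
proof (intro sup_least)
  show "u + v \<le> sup u (- u) + sup v (- v)" by (intro add_mono) auto
  have "- u + - v \<le> sup u (- u) + sup v (- v)" by (intro add_mono) auto
  thus "- (u + v) \<le> sup u (- u) + sup v (- v)" by (simp add: add.commute)
qed

lemma la_norm: "norm (lat_abs (x::'b::banach_lattice)) = norm x"
proof -
  have e: "lat_abs (lat_abs x) = lat_abs x" using la_pos la_nonneg by blast
  show ?thesis using norm_lattice_mono[of "lat_abs x" x] norm_lattice_mono[of x "lat_abs x"] e
    unfolding lat_abs_def by fastforce
qed

lemma la_norm_le: "0 \<le> (z::'b::banach_lattice) \<Longrightarrow> z \<le> lat_abs w \<Longrightarrow> norm z \<le> norm w"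
  using norm_lattice_mono[of z w] la_pos[of z] unfolding lat_abs_def by auto

lemma inf_diff_le:
  fixes x y c :: "'b::banach_lattice"
  assumes "0 \<le> c" "x \<le> y + c"
  shows "x - inf x y \<le> c"
proof -
  let ?m = "inf (x+c) (y+c)"
  have "x \<le> ?m" using assms by (simp add: add_increasing2)
  moreover have "?m - c \<le> inf x y"
    by (intro le_infI) (auto simp: diff_le_eq intro: le_infI1 le_infI2)
  ultimately have "x - c \<le> inf x y" by (meson diff_right_mono order_trans)
  thus ?thesis by (metis diff_le_eq add.commute)
qed

theorem proposition3p2:
  fixes Ts :: "nat \<Rightarrow> ('a::banach \<Rightarrow>\<^sub>L 'b::banach_lattice)"
    and T :: "'a \<Rightarrow>\<^sub>L 'b"
  assumes "\<And>n. limitedly_L_weakly_compact (Ts n)"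
    and "Ts \<longlonglongrightarrow> T"
  shows "limitedly_L_weakly_compact T"
  unfolding limitedly_L_weakly_compact_def
proof (intro allI impI)
  fix A :: "'a set" assume lim: "limited_set A"
  then have "bounded A" unfolding limited_set_def by blast
  then obtain M where M: "M > 0" "\<And>a. a \<in> A \<Longrightarrow> norm a \<le> M" by (meson bounded_pos)
  show "lwc_set (blinfun_apply T ` A)" unfolding lwc_set_def
  proof (intro allI impI)
    fix x :: "nat \<Rightarrow> 'b"
    assume "(\<forall>n. x n \<in> sol (blinfun_apply T ` A)) \<and> disjoint_seq x"
    then have xs: "\<And>k. x k \<in> sol (blinfun_apply T ` A)" and dx: "disjoint_seq x" by auto
    have "\<forall>k. \<exists>a. a \<in> A \<and> - lat_abs (T a) \<le> x k \<and> x k \<le> lat_abs (T a)"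
      using xs unfolding sol_def by fastforce
    then obtain a where a: "\<And>k. a k \<in> A" "\<And>k. - lat_abs (T (a k)) \<le> x k"
       "\<And>k. x k \<le> lat_abs (T (a k))" by metis
    show "x \<longlonglongrightarrow> 0"
    proof (rule LIMSEQ_I)
      fix e :: real assume e: "0 < e"
      have "e / (2*M) > 0" using e M by simp
      from LIMSEQ_D[OF assms(2) this] obtain n where n: "norm (Ts n - T) < e / (2*M)" by blast
      define y where "y k = inf (lat_abs (x k)) (lat_abs (Ts n (a k)))" for k
      have y0: "0 \<le> y k" for k unfolding y_def by (simp add: la_nonneg)
      have yx: "y k \<le> lat_abs (x k)" for k unfolding y_def by simp
      have sy: "\<forall>k. y k \<in> sol (blinfun_apply (Ts n) ` A)"
        proof
          fix k
          have "- lat_abs (Ts n (a k)) \<le> y k" using y0[of k] la_nonneg[of "Ts n (a k)"]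
            by (meson neg_le_0_iff_le order_trans)
          moreover have "y k \<le> lat_abs (Ts n (a k))" unfolding y_def by simp
          ultimately show "y k \<in> sol (blinfun_apply (Ts n) ` A)"
            unfolding sol_def using a(1)[of k] by auto
        qed
        have dy: "disjoint_seq y" unfolding disjoint_seq_def
        proof (intro allI impI)
          fix k m :: nat assume "k \<noteq> m"
          then have "inf (lat_abs (x k)) (lat_abs (x m)) = 0" using dx unfolding disjoint_seq_def by blast
          moreover have "inf (lat_abs (y k)) (lat_abs (y m)) \<le> inf (lat_abs (x k)) (lat_abs (x m))"
            using yx y0 la_pos by (metis inf_mono)
          moreover have "0 \<le> inf (lat_abs (y k)) (lat_abs (y m))" by (intro le_infI la_nonneg)
          ultimately show "inf (lat_abs (y k)) (lat_abs (y m)) = 0" by simp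
        qed
      have "y \<longlonglongrightarrow> 0"
        using assms(1)[of n] lim sy dy unfolding limitedly_L_weakly_compact_def lwc_set_def by blast
      have "e/2 > 0" using e by simp
      from LIMSEQ_D[OF \<open>y \<longlonglongrightarrow> 0\<close> this] obtain N where N: "\<And>k. k \<ge> N \<Longrightarrow> norm (y k) < e/2" by auto
      show "\<exists>no. \<forall>k\<ge>no. norm (x k - 0) < e"
      proof (intro exI allI impI)
        fix k assume "N \<le> k"
        let ?w = "(T - Ts n) (a k)"
        have Tdec: "T (a k) = Ts n (a k) + ?w" by (simp add: blinfun.diff_left)
        have "lat_abs (x k) \<le> lat_abs (T (a k))" using la_le a(2,3) by blast
        also have "\<dots> \<le> lat_abs (Ts n (a k)) + lat_abs ?w" using la_tri Tdec by metis
        finally have "lat_abs (x k) - y k \<le> lat_abs ?w" unfolding y_def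
          by (intro inf_diff_le la_nonneg)
        moreover have "0 \<le> lat_abs (x k) - y k" using yx by simp
        ultimately have zb: "norm (lat_abs (x k) - y k) \<le> norm ?w" using la_norm_le by blast
        have "norm ?w \<le> norm (T - Ts n) * norm (a k)" by (rule norm_blinfun)
        also have "\<dots> \<le> norm (T - Ts n) * M" using M(2)[OF a(1)[of k]] by (simp add: mult_left_mono)
        also have "\<dots> < e / (2*M) * M" using mult_strict_right_mono[OF n M(1)] by (simp add: norm_minus_commute)
        also have "\<dots> = e/2" using M by simp
        finally have wb: "norm ?w < e/2" .
        have "norm (x k) = norm (y k + (lat_abs (x k) - y k))" by (simp add: la_norm)
        also have "\<dots> \<le> norm (y k) + norm (lat_abs (x k) - y k)" by (rule norm_triangle_ineq)
        also have "\<dots> < e" using N[OF \<open>N \<le> k\<close>] zb wb by linarith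
        finally show "norm (x k - 0) < e" by simp
      qed
    qed
  qed
qed

end
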